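(* Let $p_1,p_3,\beta,q_0,q_1,q_2\in\mathbb{R}$ satisfy $q_2=5(q_1-2q_0)$ and either $p_3=0$ or $\beta=\tfrac12$. Then there is a polynomial $F$ in $u,u_x,u_{xx},u_{3x},u_{4x}$ such that for every smooth solution $u(x,t)$ of $$u_t=p_1(u^2)_x+p_3(uu_{xx}+\beta u_x^2)_x+q_0uu_{5x}+q_1u_xu_{4x}+q_2u_{2x}u_{3x}$$ one has $\partial_t(u^2)=\partial_x\big(F(u,u_x,\dots,u_{4x})\big)$. Consequently, for solutions that decay rapidly at $x\to\pm\infty$ together with their $x$-derivatives, $\int_{-\infty}^{\infty}u^2\,dx$ is independent of $t$.
   Context: Subscripts denote partial derivatives, $u_{kx}=\partial_x^k u$. *)

theory Defs
  imports "HOL-Analysis.Analysis"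
begin

definition Dx :: "nat \<Rightarrow> (real \<Rightarrow> real \<Rightarrow> real) \<Rightarrow> real \<Rightarrow> real \<Rightarrow> real" where
  "Dx k f x t = (deriv ^^ k) (\<lambda>y. f y t) x"

definition Dt :: "(real \<Rightarrow> real \<Rightarrow> real) \<Rightarrow> real \<Rightarrow> real \<Rightarrow> real" where
  "Dt f x t = deriv (\<lambda>s. f x s) t"

text \<open>Smoothness (C-infinity on R^2): the function is jointly continuous and both
  first partial derivatives exist everywhere and are again smooth.\<close>

coinductive smooth2 :: "(real \<Rightarrow> real \<Rightarrow> real) \<Rightarrow> bool" where
  "continuous_on UNIV (\<lambda>(x, t). f x t) \<Longrightarrow>
   (\<forall>x t. ((\<lambda>y. f y t) has_real_derivative fx x t) (at x)) \<Longrightarrow>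
   (\<forall>x t. ((\<lambda>s. f x s) has_real_derivative ft x t) (at t)) \<Longrightarrow>
   smooth2 fx \<Longrightarrow> smooth2 ft \<Longrightarrow> smooth2 f"

definition is_poly5 :: "(real \<Rightarrow> real \<Rightarrow> real \<Rightarrow> real \<Rightarrow> real \<Rightarrow> real) \<Rightarrow> bool" where
  "is_poly5 F \<longleftrightarrow> (\<exists>(S :: (nat \<times> nat \<times> nat \<times> nat \<times> nat) set) c. finite S \<and>
     (\<forall>a b d e g. F a b d e g =
        (\<Sum>(i, j, k, l, n)\<in>S. c (i, j, k, l, n) * a ^ i * b ^ j * d ^ k * e ^ l * g ^ n)))"

definition solves_eq :: "real \<Rightarrow> real \<Rightarrow> real \<Rightarrow> real \<Rightarrow> real \<Rightarrow> real \<Rightarrow>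
    (real \<Rightarrow> real \<Rightarrow> real) \<Rightarrow> bool" where
  "solves_eq p1 p3 \<beta> q0 q1 q2 u \<longleftrightarrow> (\<forall>x t.
     Dt u x t =
       p1 * Dx 1 (\<lambda>y s. (u y s)\<^sup>2) x t
     + p3 * Dx 1 (\<lambda>y s. u y s * Dx 2 u y s + \<beta> * (Dx 1 u y s)\<^sup>2) x t
     + q0 * u x t * Dx 5 u x t + q1 * Dx 1 u x t * Dx 4 u x t
     + q2 * Dx 2 u x t * Dx 3 u x t)"

definition rapid_decay :: "(real \<Rightarrow> real \<Rightarrow> real) \<Rightarrow> bool" where
  "rapid_decay u \<longleftrightarrow> (\<forall>a b k n. \<exists>C. \<forall>x t. a \<le> t \<and> t \<le> b \<longrightarrow>
      \<bar>x\<bar> ^ n * \<bar>Dx k u x t\<bar> \<le> C)"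

end

theory Submission
  imports Defs "HOL-Probability.Sinc_Integral"
begin

lemma Dx_0: "Dx 0 u = u" by (simp add: Dx_def fun_eq_iff)
lemma Dx_Suc: "Dx (Suc k) u x t = deriv (\<lambda>y. Dx k u y t) x"
  by (simp add: Dx_def)

lemma smooth2_deriv:
  assumes "smooth2 f"
  shows "smooth2 (\<lambda>y t. deriv (\<lambda>z. f z t) y) \<and> (\<forall>x t. ((\<lambda>y. f y t) has_real_derivative deriv (\<lambda>z. f z t) x) (at x))"
  using assms
proof cases
  case (1 fx ft)
  have e1: "deriv (\<lambda>z. f z t) y = fx y t" for y t
    using 1 by (auto intro!: DERIV_imp_deriv)
  have e: "(\<lambda>y t. deriv (\<lambda>z. f z t) y) = fx"
    using e1 by (auto simp: fun_eq_iff)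
  show ?thesis using 1 by (simp add: e e1)
qed

lemma smooth2_cont: "smooth2 f \<Longrightarrow> continuous_on UNIV (\<lambda>(x, t). f x t)"
  by (erule smooth2.cases) simp

lemma smooth2_t: "smooth2 f \<Longrightarrow> \<exists>ft. smooth2 ft \<and> (\<forall>x t. ((\<lambda>s. f x s) has_real_derivative ft x t) (at t))"
  by (erule smooth2.cases) blast

lemma smooth2_Dx: "smooth2 u \<Longrightarrow> smooth2 (\<lambda>y t. Dx k u y t)"
proof (induction k)
  case 0 then show ?case by (simp add: Dx_0)
next
  case (Suc k)
  then show ?case using smooth2_deriv[of "\<lambda>y t. Dx k u y t"] by (simp add: Dx_Suc)
qed

lemma Dx_deriv: "smooth2 u \<Longrightarrow> ((\<lambda>y. Dx k u y t) has_real_derivative Dx (Suc k) u x t) (at x)"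
  using smooth2_deriv[OF smooth2_Dx[of u k]] by (simp add: Dx_Suc)

lemma Dx_cont: "smooth2 u \<Longrightarrow> continuous_on UNIV (\<lambda>(x, t). Dx k u x t)"
  using smooth2_cont[OF smooth2_Dx] by blast

definition Fp :: "real \<Rightarrow> real \<Rightarrow> real \<Rightarrow> real \<Rightarrow> real \<Rightarrow> real \<Rightarrow> real \<Rightarrow> real \<Rightarrow> real \<Rightarrow> real" where
  "Fp p1 p3 q0 q1 a b d e g = 4/3*p1*a^3 + 2*p3*a^2*d + 2*q0*a^2*g + (2*q1-4*q0)*a*b*e
     + 2*(2*q1-4*q0)*a*d^2 - (2*q1-4*q0)*b^2*d"

lemma Fp_poly: "is_poly5 (Fp p1 p3 q0 q1)"
  unfolding is_poly5_def
  apply (rule exI[of _ "{(3,0,0,0,0),(2,0,1,0,0),(2,0,0,0,1),(1,1,0,1,0),(1,0,2,0,0),(0,2,1,0,0)}"])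
  apply (rule exI[of _ "\<lambda>z. if z = (3,0,0,0,0) then 4/3*p1 else if z = (2,0,1,0,0) then 2*p3
     else if z = (2,0,0,0,1) then 2*q0 else if z = (1,1,0,1,0) then (2*q1-4*q0)
     else if z = (1,0,2,0,0) then 2*(2*q1-4*q0) else - (2*q1-4*q0)"])
  by (simp add: Fp_def algebra_simps)

lemma Fp_deriv:
  assumes "smooth2 u"
  shows "((\<lambda>y. Fp p1 p3 q0 q1 (Dx 0 u y t) (Dx 1 u y t) (Dx 2 u y t) (Dx 3 u y t) (Dx 4 u y t))
     has_real_derivative
     (let a = Dx 0 u x t; b = Dx 1 u x t; d = Dx 2 u x t; e = Dx 3 u x t; g = Dx 4 u x t; h = Dx 5 u x t in
      4*p1*a^2*b + 2*p3*(2*a*b*d + a^2*e) + 2*q0*(2*a*b*g + a^2*h)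
      + (2*q1-4*q0)*(b*b*e + a*d*e + a*b*g) + 2*(2*q1-4*q0)*(b*d^2 + a*2*d*e) - (2*q1-4*q0)*(2*b*d*d + b^2*e))) (at x)"
proof -
  have d0: "((\<lambda>y. Dx 0 u y t) has_real_derivative Dx 1 u x t) (at x)" using Dx_deriv[OF assms, of 0] by simp
  have d1: "((\<lambda>y. Dx 1 u y t) has_real_derivative Dx 2 u x t) (at x)" using Dx_deriv[OF assms, of 1] by (simp add: numeral_eq_Suc)
  have d2: "((\<lambda>y. Dx 2 u y t) has_real_derivative Dx 3 u x t) (at x)" using Dx_deriv[OF assms, of 2] by (simp add: numeral_eq_Suc)
  have d3: "((\<lambda>y. Dx 3 u y t) has_real_derivative Dx 4 u x t) (at x)" using Dx_deriv[OF assms, of 3] by (simp add: numeral_eq_Suc)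
  have d4: "((\<lambda>y. Dx 4 u y t) has_real_derivative Dx 5 u x t) (at x)" using Dx_deriv[OF assms, of 4] by (simp add: numeral_eq_Suc)
  show ?thesis
    unfolding Fp_def Let_def
    by (rule derivative_eq_intros d0 d1 d2 d3 d4 refl | simp)+ (simp add: algebra_simps power2_eq_square power3_eq_cube)
qed
lemma Dx1_eq: "Dx 1 f x t = deriv (\<lambda>y. f y t) x" by (simp add: Dx_def)

lemma key_identity:
  assumes sm: "smooth2 u" and sol: "solves_eq p1 p3 \<beta> q0 q1 q2 u"
    and q2: "q2 = 5 * (q1 - 2 * q0)" and p3: "p3 = 0 \<or> \<beta> = 1/2"
    and ft: "\<forall>x t. ((\<lambda>s. u x s) has_real_derivative ft x t) (at t)"
  shows "2 * u x t * ft x t = deriv (\<lambda>y. Fp p1 p3 q0 q1 (Dx 0 u y t) (Dx 1 u y t) (Dx 2 u y t) (Dx 3 u y t) (Dx 4 u y t)) x"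
proof -
  have d0: "\<And>x. ((\<lambda>y. u y t) has_real_derivative Dx 1 u x t) (at x)" using Dx_deriv[OF sm, of 0] by (simp add: Dx_0)
  have d1: "\<And>x. ((\<lambda>y. Dx 1 u y t) has_real_derivative Dx 2 u x t) (at x)" using Dx_deriv[OF sm, of 1] by (simp add: numeral_eq_Suc)
  have d2: "\<And>x. ((\<lambda>y. Dx 2 u y t) has_real_derivative Dx 3 u x t) (at x)" using Dx_deriv[OF sm, of 2] by (simp add: numeral_eq_Suc)
  have Dt: "Dt u x t = ft x t" unfolding Dt_def using ft by (simp add: DERIV_imp_deriv)
  have A: "Dx 1 (\<lambda>y s. (u y s)\<^sup>2) x t = 2 * u x t * Dx 1 u x t"
    unfolding Dx1_eq[of "\<lambda>y s. (u y s)\<^sup>2"]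
    by (rule DERIV_imp_deriv) (rule derivative_eq_intros d0 refl | simp)+
  have B: "Dx 1 (\<lambda>y s. u y s * Dx 2 u y s + \<beta> * (Dx 1 u y s)\<^sup>2) x t
     = Dx 1 u x t * Dx 2 u x t + u x t * Dx 3 u x t + \<beta> * (2 * Dx 1 u x t * Dx 2 u x t)"
    unfolding Dx1_eq[of "\<lambda>y s. u y s * Dx 2 u y s + \<beta> * (Dx 1 u y s)\<^sup>2"]
    by (rule DERIV_imp_deriv) (rule derivative_eq_intros d0 d1 d2 refl | simp)+
  have E: "ft x t = p1 * (2 * u x t * Dx 1 u x t)
     + p3 * (Dx 1 u x t * Dx 2 u x t + u x t * Dx 3 u x t + \<beta> * (2 * Dx 1 u x t * Dx 2 u x t))
     + q0 * u x t * Dx 5 u x t + q1 * Dx 1 u x t * Dx 4 u x t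
     + q2 * Dx 2 u x t * Dx 3 u x t"
  proof -
    have S: "Dt u x t = p1 * Dx 1 (\<lambda>y s. (u y s)\<^sup>2) x t
     + p3 * Dx 1 (\<lambda>y s. u y s * Dx 2 u y s + \<beta> * (Dx 1 u y s)\<^sup>2) x t
     + q0 * u x t * Dx 5 u x t + q1 * Dx 1 u x t * Dx 4 u x t
     + q2 * Dx 2 u x t * Dx 3 u x t" using sol unfolding solves_eq_def by blast
    show ?thesis using S unfolding A B Dt .
  qed
  have U: "Dx 0 u x t = u x t" by (simp add: Dx_0)
  have D: "deriv (\<lambda>y. Fp p1 p3 q0 q1 (Dx 0 u y t) (Dx 1 u y t) (Dx 2 u y t) (Dx 3 u y t) (Dx 4 u y t)) x = 
     (let a = Dx 0 u x t; b = Dx 1 u x t; d = Dx 2 u x t; e = Dx 3 u x t; g = Dx 4 u x t; h = Dx 5 u x t in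
      4*p1*a^2*b + 2*p3*(2*a*b*d + a^2*e) + 2*q0*(2*a*b*g + a^2*h)
      + (2*q1-4*q0)*(b*b*e + a*d*e + a*b*g) + 2*(2*q1-4*q0)*(b*d^2 + a*2*d*e) - (2*q1-4*q0)*(2*b*d*d + b^2*e))"
    by (rule DERIV_imp_deriv[OF Fp_deriv[OF sm]])
  show ?thesis
    unfolding D Let_def U E using p3
    by (auto simp: q2 algebra_simps power2_eq_square)
qed
lemma cont_slice:
  assumes "continuous_on UNIV (\<lambda>p. G (fst p) (snd p))"
  shows "continuous_on S (\<lambda>t. G (R::real) (t::real) :: real)"
proof -
  have "continuous_on S (\<lambda>t. (\<lambda>p. G (fst p) (snd p)) (R, t))"
    by (rule continuous_on_compose2[OF assms]) (auto intro: continuous_intros)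
  then show ?thesis by simp
qed

lemma step1:
  fixes w G H :: "real \<Rightarrow> real \<Rightarrow> real"
  assumes contH: "continuous_on UNIV (\<lambda>p. H (fst p) (snd p))"
  and dt: "\<And>x t. ((\<lambda>s. w x s) has_real_derivative H x t) (at t)"
  and dx: "\<And>x t. ((\<lambda>y. G y t) has_real_derivative H x t) (at x)"
  and contw: "\<And>t. continuous_on UNIV (\<lambda>x. w x t)"
  and R: "0 \<le> R" and tt: "t1 \<le> t2"
  shows "integral {-R..R} (\<lambda>x. w x t2) - integral {-R..R} (\<lambda>x. w x t1) = integral {t1..t2} (\<lambda>t. G R t - G (-R) t)"
proof -
  have ftc_t: "((\<lambda>t. H x t) has_integral w x t2 - w x t1) {t1..t2}" for x
    by (rule fundamental_theorem_of_calculus[OF tt])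
       (auto intro: has_vector_derivative_at_within dt[unfolded has_real_derivative_iff_has_vector_derivative])
  have ftc_x: "((\<lambda>x. H x t) has_integral G R t - G (-R) t) {-R..R}" for t
    using R by (intro fundamental_theorem_of_calculus)
       (auto intro: has_vector_derivative_at_within dx[unfolded has_real_derivative_iff_has_vector_derivative])
  have cH: "continuous_on (cbox (-R,t1) (R,t2)) (\<lambda>(x,y). H x y)"
    using continuous_on_subset[OF contH] by (simp add: case_prod_unfold)
  have swap: "integral (cbox (-R) R) (\<lambda>x. integral (cbox t1 t2) (H x)) = integral (cbox t1 t2) (\<lambda>y. integral (cbox (-R) R) (\<lambda>x. H x y))"
    by (rule integral_swap_continuous[OF cH])
  have e1: "integral {t1..t2} (H x) = w x t2 - w x t1" for x
    using integral_unique[OF ftc_t[of x]] by simp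
  have e2: "integral {-R..R} (\<lambda>x. H x y) = G R y - G (-R) y" for y
    using integral_unique[OF ftc_x[of y]] by simp
  have i: "(\<lambda>x. w x t) integrable_on {-R..R}" for t
    by (rule integrable_continuous_interval[OF continuous_on_subset[OF contw]]) auto
  have "integral {-R..R} (\<lambda>x. w x t2) - integral {-R..R} (\<lambda>x. w x t1) = integral {-R..R} (\<lambda>x. w x t2 - w x t1)"
    by (rule integral_diff[OF i i, symmetric])
  also have "\<dots> = integral {t1..t2} (\<lambda>t. G R t - G (-R) t)"
    using swap unfolding cbox_interval e1 e2 by simp
  finally show ?thesis .
qed

lemma lim_step:
  fixes w :: "real \<Rightarrow> real \<Rightarrow> real"
  assumes contw: "\<And>t. continuous_on UNIV (\<lambda>x. w x t)"
  and C: "\<And>x. \<bar>w x t\<bar> \<le> C * inverse (1 + x\<^sup>2)"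
  shows "(\<lambda>n. integral {-real n..real n} (\<lambda>x. w x t)) \<longlonglongrightarrow> integral UNIV (\<lambda>x. w x t)"
proof -
  define f where "f n x = (if x \<in> {-real n..real n} then w x t else 0)" for n x
  have fi: "f n integrable_on UNIV" for n
    unfolding f_def integrable_restrict_UNIV
    by (rule integrable_continuous_interval[OF continuous_on_subset[OF contw]]) auto
  have hi0: "(\<lambda>x::real. inverse (1 + x^2)) integrable_on UNIV"
    using set_borel_integral_eq_integral(1)[OF integrable_inverse_1_plus_square] by (simp add: einterval_def)
  have hi: "(\<lambda>x::real. C * inverse (1 + x^2)) integrable_on UNIV"
    using integrable_on_cmult_left[OF hi0, of C] by simp
  have le: "norm (f k x) \<le> C * inverse (1 + x\<^sup>2)" for k x
    using C[of x] by (auto simp: f_def)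
  have conv: "(\<lambda>k. f k x) \<longlonglongrightarrow> w x t" for x
  proof (rule tendsto_eventually)
    obtain N :: nat where N: "\<bar>x\<bar> \<le> real N" using real_arch_simple by blast
    show "\<forall>\<^sub>F k in sequentially. f k x = w x t"
      unfolding eventually_sequentially
      by (rule exI[of _ N]) (use N in \<open>auto simp: f_def\<close>)
  qed
  have "(\<lambda>k. integral UNIV (f k)) \<longlonglongrightarrow> integral UNIV (\<lambda>x. w x t)"
    by (rule dominated_convergence(2)[OF fi hi le conv])
  moreover have "integral UNIV (f k) = integral {-real k..real k} (\<lambda>x. w x t)" for k
    unfolding f_def by (rule Henstock_Kurzweil_Integration.integral_restrict_UNIV)
  ultimately show ?thesis by simp
qed
lemma conservation_abstract:
  fixes w G H :: "real \<Rightarrow> real \<Rightarrow> real"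
  assumes contH: "continuous_on UNIV (\<lambda>p. H (fst p) (snd p))"
  and contG: "continuous_on UNIV (\<lambda>p. G (fst p) (snd p))"
  and dt: "\<And>x t. ((\<lambda>s. w x s) has_real_derivative H x t) (at t)"
  and dx: "\<And>x t. ((\<lambda>y. G y t) has_real_derivative H x t) (at x)"
  and contw: "\<And>t. continuous_on UNIV (\<lambda>x. w x t)"
  and decayG: "\<And>a b. \<exists>K. \<forall>x t. a \<le> t \<and> t \<le> b \<and> 1 \<le> \<bar>x\<bar> \<longrightarrow> \<bar>G x t\<bar> \<le> K / \<bar>x\<bar>"
  and dom: "\<And>t. \<exists>C. \<forall>x. \<bar>w x t\<bar> \<le> C * inverse (1 + x\<^sup>2)"
  shows "integral UNIV (\<lambda>x. w x t1) = integral UNIV (\<lambda>x. w x t2)"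
proof -
  have lim: "(\<lambda>n. integral {-real n..real n} (\<lambda>x. w x t)) \<longlonglongrightarrow> integral UNIV (\<lambda>x. w x t)" for t
  proof -
    obtain C where "\<forall>x. \<bar>w x t\<bar> \<le> C * inverse (1 + x\<^sup>2)" using dom by blast
    then show ?thesis by (intro lim_step[of w t C] contw) blast
  qed
  have main: "integral UNIV (\<lambda>x. w x a) = integral UNIV (\<lambda>x. w x b)" if ab: "a \<le> b" for a b
  proof -
    obtain K where K: "\<And>x t. a \<le> t \<Longrightarrow> t \<le> b \<Longrightarrow> 1 \<le> \<bar>x\<bar> \<Longrightarrow> \<bar>G x t\<bar> \<le> K / \<bar>x\<bar>"
      using decayG[of a b] by blast
    define d where "d n = integral {-real n..real n} (\<lambda>x. w x b) - integral {-real n..real n} (\<lambda>x. w x a)" for n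
    have l1: "d \<longlonglongrightarrow> integral UNIV (\<lambda>x. w x b) - integral UNIV (\<lambda>x. w x a)"
      unfolding d_def by (intro tendsto_diff lim)
    have bnd: "norm (d n) \<le> ((b - a) * (2 * K)) / real n" if n: "1 \<le> n" for n
    proof -
      let ?R = "real n"
      have R1: "1 \<le> ?R" using n by simp
      have D: "d n = integral {a..b} (\<lambda>t. G ?R t - G (-?R) t)"
        unfolding d_def using step1[OF contH dt dx contw _ ab, of ?R] by simp
      have I: "((\<lambda>t. G ?R t - G (-?R) t) has_integral integral {a..b} (\<lambda>t. G ?R t - G (-?R) t)) {a..b}"
        by (intro integrable_integral integrable_continuous_interval continuous_on_diff cont_slice[OF contG])
      have B0: "0 \<le> 2 * K / ?R"
      proof -
        have "\<bar>G ?R a\<bar> \<le> K / \<bar>?R\<bar>" using K[of a ?R] ab R1 by simp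
        then have "0 \<le> K / ?R" by (smt (verit) R1)
        then show ?thesis using R1 by (simp add: divide_nonneg_pos zero_le_divide_iff)
      qed
      have Bt: "norm (G ?R t - G (-?R) t) \<le> 2 * K / ?R" if "t \<in> {a..b} - {}" for t
      proof -
        have "\<bar>G ?R t\<bar> \<le> K / ?R" using K[of t ?R] that R1 by simp
        moreover have "\<bar>G (-?R) t\<bar> \<le> K / ?R" using K[of t "-?R"] that R1 by simp
        ultimately show ?thesis by simp
      qed
      have "norm (d n) \<le> 2 * K / ?R * Henstock_Kurzweil_Integration.content {a..b}"
        unfolding D by (rule has_integral_bound_real[OF B0 finite.emptyI I Bt])
      then show ?thesis using ab by (simp add: mult.commute)
    qed
    have l2: "d \<longlonglongrightarrow> 0"
    proof (rule Lim_null_comparison)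
      show "\<forall>\<^sub>F n in sequentially. norm (d n) \<le> ((b - a) * (2 * K)) / real n"
        unfolding eventually_sequentially using bnd by blast
      show "(\<lambda>n. ((b - a) * (2 * K)) / real n) \<longlonglongrightarrow> 0" by (rule lim_const_over_n)
    qed
    from LIMSEQ_unique[OF l1 l2] show ?thesis by simp
  qed
  show ?thesis
  proof (cases "t1 \<le> t2")
    case True then show ?thesis by (rule main)
  next
    case False then show ?thesis using main[of t2 t1] by simp
  qed
qed
lemma tri: "\<bar>x\<bar> \<le> \<delta> \<Longrightarrow> \<bar>y\<bar> \<le> M \<Longrightarrow> \<bar>z\<bar> \<le> M \<Longrightarrow> \<bar>c * (x*y*z)\<bar> \<le> \<bar>c\<bar> * (\<delta>*M*(M::real))"
proof -
  assume h: "\<bar>x\<bar> \<le> \<delta>" "\<bar>y\<bar> \<le> M" "\<bar>z\<bar> \<le> M"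
  have "\<bar>x\<bar>*\<bar>y\<bar> \<le> \<delta>*M" using h by (intro mult_mono) auto
  then have "\<bar>x\<bar>*\<bar>y\<bar>*\<bar>z\<bar> \<le> \<delta>*M*M" using h by (intro mult_mono) auto
  then show ?thesis by (simp add: abs_mult mult_left_mono mult.assoc)
qed

lemma sum6: "\<bar>x1\<bar>\<le>b1 \<Longrightarrow> \<bar>x2\<bar>\<le>b2 \<Longrightarrow> \<bar>x3\<bar>\<le>b3 \<Longrightarrow> \<bar>x4\<bar>\<le>b4 \<Longrightarrow> \<bar>x5\<bar>\<le>b5 \<Longrightarrow> \<bar>x6\<bar>\<le>b6 \<Longrightarrow>
   \<bar>x1+x2+x3+x4+x5+x6\<bar> \<le> b1+b2+b3+b4+b5+(b6::real)"
  by (simp only: abs_le_iff) linarith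

lemma Fp_bound:
  assumes "\<bar>a\<bar> \<le> M" "\<bar>b\<bar> \<le> M" "\<bar>d\<bar> \<le> M" "\<bar>e\<bar> \<le> M" "\<bar>g\<bar> \<le> M"
   "\<bar>a\<bar> \<le> \<delta>" "\<bar>b\<bar> \<le> \<delta>" "\<bar>d\<bar> \<le> \<delta>" "\<bar>e\<bar> \<le> \<delta>" "\<bar>g\<bar> \<le> \<delta>"
  shows "\<bar>Fp p1 p3 q0 q1 a b d e g\<bar> \<le> (4/3*\<bar>p1\<bar> + 2*\<bar>p3\<bar> + 2*\<bar>q0\<bar> + 4*\<bar>2*q1-4*q0\<bar>) * (\<delta>*M*M)"
proof -
  let ?B = "2*q1-4*q0"
  have e: "Fp p1 p3 q0 q1 a b d e g = (4/3*p1)*(a*a*a) + (2*p3)*(d*a*a) + (2*q0)*(g*a*a) + ?B*(e*a*b) + (2*?B)*(d*a*d) + (-?B)*(d*b*b)"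
    by (simp add: Fp_def algebra_simps power2_eq_square power3_eq_cube)
  have h1: "\<bar>(4/3*p1)*(a*a*a)\<bar> \<le> \<bar>4/3*p1\<bar>*(\<delta>*M*M)" using assms by (intro tri) auto
  have h2: "\<bar>(2*p3)*(d*a*a)\<bar> \<le> \<bar>2*p3\<bar>*(\<delta>*M*M)" using assms by (intro tri) auto
  have h3: "\<bar>(2*q0)*(g*a*a)\<bar> \<le> \<bar>2*q0\<bar>*(\<delta>*M*M)" using assms by (intro tri) auto
  have h4: "\<bar>?B*(e*a*b)\<bar> \<le> \<bar>?B\<bar>*(\<delta>*M*M)" using assms by (intro tri) auto
  have h5: "\<bar>(2*?B)*(d*a*d)\<bar> \<le> \<bar>2*?B\<bar>*(\<delta>*M*M)" using assms by (intro tri) auto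
  have h6: "\<bar>(-?B)*(d*b*b)\<bar> \<le> \<bar>-?B\<bar>*(\<delta>*M*M)" using assms by (intro tri) auto
  have x1: "\<bar>4/3*p1\<bar> = 4/3*\<bar>p1\<bar>" by (subst abs_mult) simp
  have x2: "\<bar>2*p3\<bar> = 2*\<bar>p3\<bar>" by (subst abs_mult) simp
  have x3: "\<bar>2*q0\<bar> = 2*\<bar>q0\<bar>" by (subst abs_mult) simp
  have x4: "\<bar>2*?B\<bar> = 2*\<bar>?B\<bar>" by (subst abs_mult) simp
  have x5: "\<bar>-?B\<bar> = \<bar>?B\<bar>" by (rule abs_minus_cancel)
  note x = x1 x2 x3 x4 x5
  show ?thesis unfolding e
    by (rule order_trans[OF sum6[OF h1 h2 h3 h4 h5 h6]]) (simp only: x, simp add: algebra_simps)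
qed
lemma cont_pair: "continuous_on UNIV (\<lambda>(x, t). f x t) \<Longrightarrow> continuous_on UNIV (\<lambda>p. f (fst p) (snd p))"
  by (simp add: case_prod_unfold)

lemma decay_G:
  assumes rd: "rapid_decay u"
  shows "\<exists>K. \<forall>x t. a \<le> t \<and> t \<le> b \<and> 1 \<le> \<bar>x\<bar> \<longrightarrow>
     \<bar>Fp p1 p3 q0 q1 (Dx 0 u x t) (Dx 1 u x t) (Dx 2 u x t) (Dx 3 u x t) (Dx 4 u x t)\<bar> \<le> K / \<bar>x\<bar>"
proof -
  have "\<forall>k n. \<exists>C. \<forall>(x::real) (t::real). a \<le> t \<and> t \<le> b \<longrightarrow> \<bar>x\<bar> ^ n * \<bar>Dx k u x t\<bar> \<le> C"
    using rd unfolding rapid_decay_def by blast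
  then obtain C where C: "\<And>k n x t. a \<le> t \<Longrightarrow> t \<le> b \<Longrightarrow> \<bar>x\<bar> ^ n * \<bar>Dx k u x t\<bar> \<le> C k n"
    by metis
  define M where "M = (\<Sum>k<5. \<bar>C k 0\<bar> + \<bar>C k 1\<bar>)"
  have CM: "\<bar>C k n\<bar> \<le> M" if "k < 5" "n \<le> 1" for k n
  proof -
    have "\<bar>C k n\<bar> \<le> \<bar>C k 0\<bar> + \<bar>C k 1\<bar>" using that by (cases n) auto
    also have "\<dots> \<le> M" unfolding M_def
      by (rule member_le_sum[of k "{..<5}" "\<lambda>k. \<bar>C k 0\<bar> + \<bar>C k 1\<bar>"]) (use that in auto)
    finally show ?thesis .
  qed
  define Kc where "Kc = (4/3*\<bar>p1\<bar> + 2*\<bar>p3\<bar> + 2*\<bar>q0\<bar> + 4*\<bar>2*q1-4*q0\<bar>)"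
  show ?thesis
  proof (rule exI[of _ "Kc * (M * M * M)"], intro allI impI)
    fix x t :: real assume h: "a \<le> t \<and> t \<le> b \<and> 1 \<le> \<bar>x\<bar>"
    have b0: "\<bar>Dx k u x t\<bar> \<le> M" if "k < 5" for k
      using C[where k=k and n=0 and x=x and t=t] CM[of k 0] h that by simp
    have b1: "\<bar>Dx k u x t\<bar> \<le> M / \<bar>x\<bar>" if "k < 5" for k
    proof -
      have "\<bar>x\<bar> * \<bar>Dx k u x t\<bar> \<le> M" using C[where k=k and n=1 and x=x and t=t] CM[of k 1] h that by simp
      moreover have "0 < \<bar>x\<bar>" using h by linarith
      ultimately show ?thesis by (simp add: pos_le_divide_eq mult.commute)
    qed
    have "\<bar>Fp p1 p3 q0 q1 (Dx 0 u x t) (Dx 1 u x t) (Dx 2 u x t) (Dx 3 u x t) (Dx 4 u x t)\<bar>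
        \<le> Kc * (M / \<bar>x\<bar> * M * M)"
      unfolding Kc_def by (rule Fp_bound) (simp_all add: b0 b1)
    also have "\<dots> = Kc * (M * M * M) / \<bar>x\<bar>" by simp
    finally show "\<bar>Fp p1 p3 q0 q1 (Dx 0 u x t) (Dx 1 u x t) (Dx 2 u x t) (Dx 3 u x t) (Dx 4 u x t)\<bar> \<le> Kc * (M * M * M) / \<bar>x\<bar>" .
  qed
qed

lemma dom_u:
  assumes rd: "rapid_decay u"
  shows "\<exists>C. \<forall>x. \<bar>(u x t)\<^sup>2\<bar> \<le> C * inverse (1 + x\<^sup>2)"
proof -
  obtain C0 where C0: "\<And>x. \<bar>x\<bar> ^ 0 * \<bar>Dx 0 u x t\<bar> \<le> C0"
    using rd unfolding rapid_decay_def by (metis order_refl)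
  obtain C1 where C1: "\<And>x. \<bar>x\<bar> ^ 1 * \<bar>Dx 0 u x t\<bar> \<le> C1"
    using rd unfolding rapid_decay_def by (metis order_refl)
  show ?thesis
  proof (rule exI[of _ "C0\<^sup>2 + C1\<^sup>2"], intro allI)
    fix x
    have a0: "\<bar>u x t\<bar> \<le> C0" using C0[of x] by (simp add: Dx_0)
    have a1: "\<bar>x * u x t\<bar> \<le> C1" using C1[of x] by (simp add: Dx_0 abs_mult)
    have "(u x t)\<^sup>2 \<le> C0\<^sup>2" using a0 by (metis abs_ge_zero power2_abs power_mono)
    moreover have "(x * u x t)\<^sup>2 \<le> C1\<^sup>2" using a1 by (metis abs_ge_zero power2_abs power_mono)
    ultimately have "(u x t)\<^sup>2 * (1 + x\<^sup>2) \<le> C0\<^sup>2 + C1\<^sup>2"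
      by (simp add: algebra_simps power_mult_distrib)
    moreover have "0 < 1 + x\<^sup>2" by (simp add: add_pos_nonneg)
    ultimately show "\<bar>(u x t)\<^sup>2\<bar> \<le> (C0\<^sup>2 + C1\<^sup>2) * inverse (1 + x\<^sup>2)"
      by (simp add: pos_le_divide_eq field_simps)
  qed
qed
theorem mainTheorem5:
  fixes p1 p3 \<beta> q0 q1 q2 :: real
  assumes "q2 = 5 * (q1 - 2 * q0)"
    and "p3 = 0 \<or> \<beta> = 1/2"
  shows "(\<exists>F. is_poly5 F \<and>
            (\<forall>u. smooth2 u \<and> solves_eq p1 p3 \<beta> q0 q1 q2 u \<longrightarrow>
               (\<forall>x t. Dt (\<lambda>y s. (u y s)\<^sup>2) x t =
                  deriv (\<lambda>y. F (u y t) (Dx 1 u y t) (Dx 2 u y t) (Dx 3 u y t) (Dx 4 u y t)) x)))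
       \<and> (\<forall>u. smooth2 u \<and> solves_eq p1 p3 \<beta> q0 q1 q2 u \<and> rapid_decay u \<longrightarrow>
            (\<forall>t1 t2. integral UNIV (\<lambda>x. (u x t1)\<^sup>2) = integral UNIV (\<lambda>x. (u x t2)\<^sup>2)))"
proof -
  have U: "\<And>u y t. Dx 0 u y t = u y t" by (simp add: Dx_0)
  have part: "Dt (\<lambda>y s. (u y s)\<^sup>2) x t = 2 * u x t * ft x t
     \<and> ((\<lambda>s. (u x s)\<^sup>2) has_real_derivative 2 * u x t * ft x t) (at t)"
    if ft: "\<forall>x t. ((\<lambda>s. u x s) has_real_derivative ft x t) (at t)" for u ft x t
  proof -
    have "((\<lambda>s. (u x s)\<^sup>2) has_real_derivative 2 * u x t * ft x t) (at t)"
      using ft by (auto intro!: derivative_eq_intros)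
    then show ?thesis unfolding Dt_def by (simp add: DERIV_imp_deriv)
  qed
  show ?thesis
  proof (intro conjI exI[of _ "Fp p1 p3 q0 q1"] allI impI)
    show "is_poly5 (Fp p1 p3 q0 q1)" by (rule Fp_poly)
  next
    fix u x t assume h: "smooth2 u \<and> solves_eq p1 p3 \<beta> q0 q1 q2 u"
    obtain ft where ft: "\<forall>x t. ((\<lambda>s. u x s) has_real_derivative ft x t) (at t)"
      using smooth2_t[of u] h by blast
    show "Dt (\<lambda>y s. (u y s)\<^sup>2) x t =
          deriv (\<lambda>y. Fp p1 p3 q0 q1 (u y t) (Dx 1 u y t) (Dx 2 u y t) (Dx 3 u y t) (Dx 4 u y t)) x"
      using part[OF ft, of x t] key_identity[OF _ _ assms ft, where x=x and t=t] h by (simp add: U)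
  next
    fix u t1 t2 assume h: "smooth2 u \<and> solves_eq p1 p3 \<beta> q0 q1 q2 u \<and> rapid_decay u"
    then have sm: "smooth2 u" and sol: "solves_eq p1 p3 \<beta> q0 q1 q2 u" and rd: "rapid_decay u" by auto
    obtain ft where ftS: "smooth2 ft" and ft: "\<forall>x t. ((\<lambda>s. u x s) has_real_derivative ft x t) (at t)"
      using smooth2_t[OF sm] by blast
    define G where "G y t = Fp p1 p3 q0 q1 (Dx 0 u y t) (Dx 1 u y t) (Dx 2 u y t) (Dx 3 u y t) (Dx 4 u y t)" for y t
    define H where "H x t = 2 * u x t * ft x t" for x t
    have cu: "continuous_on UNIV (\<lambda>p. u (fst p) (snd p))" by (rule cont_pair[OF smooth2_cont[OF sm]])
    have cft: "continuous_on UNIV (\<lambda>p. ft (fst p) (snd p))" by (rule cont_pair[OF smooth2_cont[OF ftS]])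
    have cD: "\<And>k. continuous_on UNIV (\<lambda>p. Dx k u (fst p) (snd p))" by (rule cont_pair[OF Dx_cont[OF sm]])
    have contH: "continuous_on UNIV (\<lambda>p. H (fst p) (snd p))"
      unfolding H_def by (intro continuous_intros cu cft)
    have contG: "continuous_on UNIV (\<lambda>p. G (fst p) (snd p))"
      unfolding G_def Fp_def by (intro continuous_intros cD)
    have dt: "((\<lambda>s. (u x s)\<^sup>2) has_real_derivative H x t) (at t)" for x t
      using part[OF ft, of x t] unfolding H_def by blast
    have dx: "((\<lambda>y. G y t) has_real_derivative H x t) (at x)" for x t
    proof -
      have "H x t = deriv (\<lambda>y. G y t) x" unfolding H_def G_def by (rule key_identity[OF sm sol assms ft])
      also have "\<dots> = (let a = Dx 0 u x t; b = Dx 1 u x t; d = Dx 2 u x t; e = Dx 3 u x t; g = Dx 4 u x t; h = Dx 5 u x t in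
      4*p1*a^2*b + 2*p3*(2*a*b*d + a^2*e) + 2*q0*(2*a*b*g + a^2*h)
      + (2*q1-4*q0)*(b*b*e + a*d*e + a*b*g) + 2*(2*q1-4*q0)*(b*d^2 + a*2*d*e) - (2*q1-4*q0)*(2*b*d*d + b^2*e))"
        unfolding G_def by (rule DERIV_imp_deriv[OF Fp_deriv[OF sm]])
      finally show ?thesis unfolding G_def using Fp_deriv[OF sm, of p1 p3 q0 q1 t x] by simp
    qed
    have contw: "continuous_on UNIV (\<lambda>x. (u x t)\<^sup>2)" for t
    proof -
      have "isCont (\<lambda>x. u x t) x" for x
        using DERIV_isCont[OF Dx_deriv[OF sm, of 0 t x]] by (simp add: U)
      then have "continuous_on UNIV (\<lambda>x. u x t)" by (simp add: continuous_at_imp_continuous_on)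
      then show ?thesis by (intro continuous_intros)
    qed
    have decayG: "\<exists>K. \<forall>x t. a \<le> t \<and> t \<le> b \<and> 1 \<le> \<bar>x\<bar> \<longrightarrow> \<bar>G x t\<bar> \<le> K / \<bar>x\<bar>" for a b
      unfolding G_def by (rule decay_G[OF rd])
    show "integral UNIV (\<lambda>x. (u x t1)\<^sup>2) = integral UNIV (\<lambda>x. (u x t2)\<^sup>2)"
      by (rule conservation_abstract[OF contH contG dt dx contw decayG dom_u[OF rd]])
  qed
qed
end
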